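(* Let $(X,d)$ be a compact metric space, $f:X\to X$ continuous, and $\mathcal A\subset\mathcal K(X)$ a nonempty set with the finite union property. Then $$\mathcal E(f_{\mathcal K},\mathcal A)\ge\lim_{\varepsilon\to0}\limsup_{n\to\infty}\frac{\log B(\mathcal A,n,\varepsilon)}{n}.$$
   Context: $\mathcal K(X)$ is the space of nonempty closed subsets of $X$, $f_{\mathcal K}(B)=f(B)$. $\mathcal A$ has the finite union property if $B\cup C\in\mathcal A$ for all $B,C\in\mathcal A$. $d_n(x,y)=\max_{0\le i\le n-1}d(f^ix,f^iy)$. $B,C$ are $(n,\varepsilon)$-split if $\min\{d_n(x,y):x\in B,y\in C\}>\varepsilon$; $B(\mathcal A,n,\varepsilon)$ is the maximal number of pairwise $(n,\varepsilon)$-split elements of $\mathcal A$. $A^\varepsilon_n=\{x:d_n(x,A)<\varepsilon\}$, $H^n(B,C)=\inf\{\varepsilon>0:B\subset C^\varepsilon_n,C\subset B^\varepsilon_n\}$; $N_{\mathcal K}(\mathcal Z,n,\varepsilon)$ is the smallest cardinality of $\mathcal G\subset\mathcal K(X)$ with each $B\in\mathcal Z$ within $H^n$-distance $\le\varepsilon$ of some element of $\mathcal G$; $\mathcal E(f_{\mathcal K},\mathcal Z)=\lim_{\varepsilon\to0}\limsup_n\frac{\log\log N_{\mathcal K}(\mathcal Z,n,\varepsilon)}{n}$ (convention $\log0=0$). *)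

theory Defs
  imports "HOL-Analysis.Analysis"
begin

definition lg :: "real \<Rightarrow> real" where
  "lg x = (if x \<le> 0 then 0 else ln x)"

definition Kspace :: "'a::metric_space set \<Rightarrow> 'a set set" where
  "Kspace X = {B. B \<subseteq> X \<and> B \<noteq> {} \<and> closed B}"

definition finite_union_property :: "'a set set \<Rightarrow> bool" where
  "finite_union_property \<A> \<longleftrightarrow> (\<forall>B\<in>\<A>. \<forall>C\<in>\<A>. B \<union> C \<in> \<A>)"

definition dn :: "('a::metric_space \<Rightarrow> 'a) \<Rightarrow> nat \<Rightarrow> 'a \<Rightarrow> 'a \<Rightarrow> real" where
  "dn f n x y = Max ((\<lambda>i. dist ((f ^^ i) x) ((f ^^ i) y)) ` {..<n})"

definition split_sets :: "('a::metric_space \<Rightarrow> 'a) \<Rightarrow> nat \<Rightarrow> real \<Rightarrow> 'a set \<Rightarrow> 'a set \<Rightarrow> bool" where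
  "split_sets f n \<epsilon> B C \<longleftrightarrow> Inf ((\<lambda>(x,y). dn f n x y) ` (B \<times> C)) > \<epsilon>"

definition Bnum :: "('a::metric_space \<Rightarrow> 'a) \<Rightarrow> 'a set set \<Rightarrow> nat \<Rightarrow> real \<Rightarrow> nat" where
  "Bnum f \<A> n \<epsilon> = Sup {card S | S. S \<subseteq> \<A> \<and> finite S \<and>
      (\<forall>B\<in>S. \<forall>C\<in>S. B \<noteq> C \<longrightarrow> split_sets f n \<epsilon> B C)}"

definition nbhd :: "('a::metric_space \<Rightarrow> 'a) \<Rightarrow> 'a set \<Rightarrow> nat \<Rightarrow> real \<Rightarrow> 'a set \<Rightarrow> 'a set" where
  "nbhd f X n \<epsilon> A = {x\<in>X. Inf ((\<lambda>a. dn f n x a) ` A) < \<epsilon>}"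

definition Hn :: "('a::metric_space \<Rightarrow> 'a) \<Rightarrow> 'a set \<Rightarrow> nat \<Rightarrow> 'a set \<Rightarrow> 'a set \<Rightarrow> real" where
  "Hn f X n B C = Inf {\<epsilon>. \<epsilon> > 0 \<and> B \<subseteq> nbhd f X n \<epsilon> C \<and> C \<subseteq> nbhd f X n \<epsilon> B}"

definition NK :: "('a::metric_space \<Rightarrow> 'a) \<Rightarrow> 'a set \<Rightarrow> 'a set set \<Rightarrow> nat \<Rightarrow> real \<Rightarrow> nat" where
  "NK f X \<Z> n \<epsilon> = Inf {card \<G> | \<G>. finite \<G> \<and> \<G> \<subseteq> Kspace X \<and>
      (\<forall>B\<in>\<Z>. \<exists>C\<in>\<G>. Hn f X n B C \<le> \<epsilon>)}"

definition Eent :: "('a::metric_space \<Rightarrow> 'a) \<Rightarrow> 'a set \<Rightarrow> 'a set set \<Rightarrow> ereal" where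
  "Eent f X \<Z> = Lim (at_right 0)
     (\<lambda>\<epsilon>. limsup (\<lambda>n. ereal (lg (lg (real (NK f X \<Z> n \<epsilon>))) / real n)))"

end

theory Submission
  imports Defs
begin

lemma iter_props:
  assumes "f ` X \<subseteq> X" "continuous_on X f"
  shows "(f^^i) ` X \<subseteq> X \<and> continuous_on X (f^^i)"
proof (induction i)
  case 0 then show ?case by (simp add: continuous_on_id)
next
  case (Suc i)
  then have "continuous_on X (f \<circ> (f^^i))"
    by (meson assms(2) continuous_on_compose continuous_on_subset)
  with Suc assms show ?case by (auto simp: image_subset_iff)
qed

lemma ne_lt: "n \<ge> (1::nat) \<Longrightarrow> {..<n} \<noteq> {}"
  by (metis lessThan_empty_iff not_one_le_zero)

lemma dn_nonneg: "n \<ge> 1 \<Longrightarrow> dn f n x y \<ge> 0"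
  unfolding dn_def using ne_lt[of n] by (subst Max_ge_iff) auto

lemma dn_self: "n \<ge> 1 \<Longrightarrow> dn f n x x = 0"
  unfolding dn_def using ne_lt[of n] by (simp add: image_constant_conv)

lemma dn_sym: "dn f n x y = dn f n y x"
  unfolding dn_def by (simp add: dist_commute)

lemma dn_lt: "n \<ge> 1 \<Longrightarrow> dn f n x y < r \<longleftrightarrow> (\<forall>i<n. dist ((f^^i) x) ((f^^i) y) < r)"
  unfolding dn_def using ne_lt[of n] by (subst Max_less_iff) auto

lemma dn_le: "n \<ge> 1 \<Longrightarrow> dn f n x y \<le> r \<longleftrightarrow> (\<forall>i<n. dist ((f^^i) x) ((f^^i) y) \<le> r)"
  unfolding dn_def using ne_lt[of n] by (subst Max_le_iff) auto

lemma dn_ge: "i < n \<Longrightarrow> dist ((f^^i) x) ((f^^i) y) \<le> dn f n x y"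
  unfolding dn_def by (rule Max_ge) auto

lemma dn_tri: "n \<ge> 1 \<Longrightarrow> dn f n x z \<le> dn f n x y + dn f n y z"
proof -
  assume n: "n \<ge> 1"
  show ?thesis unfolding dn_le[OF n]
  proof (intro allI impI)
    fix i assume i: "i < n"
    have "dist ((f^^i) x) ((f^^i) z) \<le> dist ((f^^i) x) ((f^^i) y) + dist ((f^^i) y) ((f^^i) z)"
      by (rule dist_triangle)
    also have "\<dots> \<le> dn f n x y + dn f n y z" using dn_ge[OF i] by (meson add_mono)
    finally show "dist ((f^^i) x) ((f^^i) z) \<le> dn f n x y + dn f n y z" .
  qed
qed

lemma common_delta:
  fixes P :: "'i \<Rightarrow> real \<Rightarrow> bool"
  assumes "finite I" "\<forall>i\<in>I. \<exists>d>0. P i d" "\<And>i d d'. P i d \<Longrightarrow> 0 < d' \<Longrightarrow> d' \<le> d \<Longrightarrow> P i d'"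
  shows "\<exists>d>0. \<forall>i\<in>I. P i d"
  using assms(1,2)
proof (induction I rule: finite_induct)
  case empty then show ?case by (intro exI[of _ 1]) simp
next
  case (insert a I)
  then obtain d where d: "d>0" "\<forall>i\<in>I. P i d" by auto
  obtain e where e: "e > 0" "P a e" using insert by auto
  have m: "min d e > 0" "min d e \<le> d" "min d e \<le> e" using d(1) e(1) by auto
  have "\<forall>i\<in>insert a I. P i (min d e)"
  proof
    fix i assume "i \<in> insert a I"
    then show "P i (min d e)"
    proof
      assume "i = a" then show ?thesis using assms(3)[OF e(2) m(1) m(3)] by simp
    next
      assume "i \<in> I" then show ?thesis using assms(3)[OF _ m(1) m(2)] d(2) by blast
    qed
  qed
  then show ?case using m(1) by blast
qed

lemma net:
  fixes X :: "'a::metric_space set"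
  assumes "compact X" "continuous_on X f" "f ` X \<subseteq> X" "n \<ge> 1" "r > 0"
  shows "\<exists>F. finite F \<and> F \<subseteq> X \<and> (\<forall>x\<in>X. \<exists>p\<in>F. dn f n x p < r)"
proof -
  have "\<forall>i\<in>{..<n}. \<exists>d>0. \<forall>x\<in>X. \<forall>y\<in>X. dist y x < d \<longrightarrow> dist ((f^^i) y) ((f^^i) x) < r"
  proof
    fix i
    have "uniformly_continuous_on X (f^^i)"
      using compact_uniformly_continuous iter_props[OF assms(3,2)] assms(1) by blast
    then show "\<exists>d>0. \<forall>x\<in>X. \<forall>y\<in>X. dist y x < d \<longrightarrow> dist ((f^^i) y) ((f^^i) x) < r"
      unfolding uniformly_continuous_on_def using assms(5) by blast
  qed
  then have "\<exists>d>0. \<forall>i\<in>{..<n}. \<forall>x\<in>X. \<forall>y\<in>X. dist y x < d \<longrightarrow> dist ((f^^i) y) ((f^^i) x) < r"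
  proof (intro common_delta[of "{..<n}" "\<lambda>i d. \<forall>x\<in>X. \<forall>y\<in>X. dist y x < d \<longrightarrow> dist ((f^^i) y) ((f^^i) x) < r"])
    fix i :: nat and d d' :: real
    assume "\<forall>x\<in>X. \<forall>y\<in>X. dist y x < d \<longrightarrow> dist ((f^^i) y) ((f^^i) x) < r" "0 < d'" "d' \<le> d"
    then show "\<forall>x\<in>X. \<forall>y\<in>X. dist y x < d' \<longrightarrow> dist ((f^^i) y) ((f^^i) x) < r"
      by (meson order_less_le_trans)
  qed simp_all
  then obtain d where d: "d > 0" "\<forall>i\<in>{..<n}. \<forall>x\<in>X. \<forall>y\<in>X. dist y x < d \<longrightarrow> dist ((f^^i) y) ((f^^i) x) < r"
    by blast
  obtain k where k: "finite k" "k \<subseteq> X" "X \<subseteq> (\<Union>x\<in>k. ball x d)"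
    using seq_compact_imp_totally_bounded[OF compact_imp_seq_compact[OF assms(1)], rule_format, OF d(1)] by blast
  show ?thesis
  proof (intro exI[of _ k] conjI ballI)
    fix x assume x: "x \<in> X"
    then obtain p where p: "p \<in> k" "dist p x < d" using k(3) by auto
    have pX: "p \<in> X" using p(1) k(2) by blast
    have "\<forall>i<n. dist ((f^^i) x) ((f^^i) p) < r"
    proof (intro allI impI)
      fix i assume "i < n"
      then have "dist ((f^^i) p) ((f^^i) x) < r" using d(2) x pX p(2) by simp
      then show "dist ((f^^i) x) ((f^^i) p) < r" by (simp add: dist_commute)
    qed
    then show "\<exists>p\<in>k. dn f n x p < r" using dn_lt[OF assms(4)] p(1) by blast
  qed (use k in auto)
qed

lemma union_mem:
  assumes "finite_union_property \<A>" "finite I" "I \<noteq> {}" "I \<subseteq> \<A>"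
  shows "\<Union>I \<in> \<A>"
  using assms(2,3,4)
proof (induction I rule: finite_ne_induct)
  case (singleton x) then show ?case by simp
next
  case (insert x F) then show ?case using assms(1) unfolding finite_union_property_def by auto
qed

definition "sfam f n \<A> e S \<longleftrightarrow> S \<subseteq> \<A> \<and> finite S \<and> (\<forall>B\<in>S. \<forall>C\<in>S. B \<noteq> C \<longrightarrow> split_sets f n e B C)"

context
  fixes X :: "'a::metric_space set" and f :: "'a \<Rightarrow> 'a" and n :: nat
  assumes cX: "compact X" and cf: "continuous_on X f" and fX: "f ` X \<subseteq> X" and n1: "n \<ge> 1"
begin

lemma dn_bdd: "\<exists>M\<ge>0. \<forall>x\<in>X. \<forall>y\<in>X. dn f n x y \<le> M"
proof -
  obtain e where e: "\<forall>x\<in>X. \<forall>y\<in>X. dist x y \<le> e"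
    using compact_imp_bounded[OF cX] bounded_two_points by blast
  have "\<forall>x\<in>X. \<forall>y\<in>X. dn f n x y \<le> max e 0"
  proof (intro ballI)
    fix x y assume "x \<in> X" "y \<in> X"
    then have "\<forall>i<n. dist ((f^^i) x) ((f^^i) y) \<le> max e 0"
      using iter_props[OF fX cf] e by (meson image_subset_iff max.coboundedI1)
    then show "dn f n x y \<le> max e 0" using dn_le[OF n1] by blast
  qed
  then show ?thesis by (intro exI[of _ "max e 0"]) auto
qed

lemma Inf_dn_le: "c \<in> C \<Longrightarrow> Inf ((\<lambda>a. dn f n x a) ` C) \<le> dn f n x c"
  by (rule cInf_lower) (auto intro!: bdd_belowI[of _ 0] dn_nonneg[OF n1])

lemma Inf_dn_lessD: "C \<noteq> {} \<Longrightarrow> Inf ((\<lambda>a. dn f n x a) ` C) < r \<Longrightarrow> \<exists>c\<in>C. dn f n x c < r"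
  using cInf_lessD[of "(\<lambda>a. dn f n x a) ` C" r] by auto

lemma Hn_le: "r > 0 \<Longrightarrow> B \<subseteq> nbhd f X n r C \<Longrightarrow> C \<subseteq> nbhd f X n r B \<Longrightarrow> Hn f X n B C \<le> r"
  unfolding Hn_def by (rule cInf_lower) (auto intro!: bdd_belowI[of _ 0])

lemma Hn_set_ne:
  assumes "B \<subseteq> X" "C \<subseteq> X" "B \<noteq> {}" "C \<noteq> {}"
  shows "{\<epsilon>. \<epsilon> > 0 \<and> B \<subseteq> nbhd f X n \<epsilon> C \<and> C \<subseteq> nbhd f X n \<epsilon> B} \<noteq> {}"
proof -
  obtain M where M: "M \<ge> 0" "\<forall>x\<in>X. \<forall>y\<in>X. dn f n x y \<le> M" using dn_bdd by blast
  have "B \<subseteq> nbhd f X n (M+1) C" unfolding nbhd_def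
  proof
    fix x assume x: "x \<in> B"
    obtain c where "c \<in> C" using assms by auto
    then have "Inf ((\<lambda>a. dn f n x a) ` C) \<le> dn f n x c" by (rule Inf_dn_le)
    also have "\<dots> \<le> M" using M x \<open>c \<in> C\<close> assms by auto
    finally show "x \<in> {x \<in> X. Inf ((\<lambda>a. dn f n x a) ` C) < M + 1}" using x assms by auto
  qed
  moreover have "C \<subseteq> nbhd f X n (M+1) B" unfolding nbhd_def
  proof
    fix x assume x: "x \<in> C"
    obtain c where "c \<in> B" using assms by auto
    then have "Inf ((\<lambda>a. dn f n x a) ` B) \<le> dn f n x c" by (rule Inf_dn_le)
    also have "\<dots> \<le> M" using M x \<open>c \<in> B\<close> assms by auto
    finally show "x \<in> {x \<in> X. Inf ((\<lambda>a. dn f n x a) ` B) < M + 1}" using x assms by auto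
  qed
  ultimately show ?thesis using M(1)
    by (metis (mono_tags, lifting) add_nonneg_pos empty_Collect_eq zero_less_one)
qed

lemma Hn_close:
  assumes "U \<subseteq> X" "U \<noteq> {}" "V \<subseteq> X" "V \<noteq> {}" "C \<subseteq> X" "C \<noteq> {}"
    and "Hn f X n U C \<le> e" "Hn f X n V C \<le> e" "e > 0" "x \<in> U"
  shows "\<exists>y\<in>V. dn f n x y < 3*e"
proof -
  obtain e1 where e1: "e1 > 0" "U \<subseteq> nbhd f X n e1 C" "e1 < 3*e/2"
    using cInf_lessD[OF Hn_set_ne[OF assms(1,5,2,6)], of "3*e/2"] assms(7,9) unfolding Hn_def by auto
  obtain e2 where e2: "e2 > 0" "C \<subseteq> nbhd f X n e2 V" "e2 < 3*e/2"
    using cInf_lessD[OF Hn_set_ne[OF assms(3,5,4,6)], of "3*e/2"] assms(8,9) unfolding Hn_def by auto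
  have "Inf ((\<lambda>a. dn f n x a) ` C) < e1" using e1(2) assms(10) unfolding nbhd_def by auto
  then obtain c where c: "c \<in> C" "dn f n x c < e1" using Inf_dn_lessD assms(6) by blast
  have "Inf ((\<lambda>a. dn f n c a) ` V) < e2" using e2(2) c(1) unfolding nbhd_def by auto
  then obtain y where y: "y \<in> V" "dn f n c y < e2" using Inf_dn_lessD assms(4) by blast
  have "dn f n x y \<le> dn f n x c + dn f n c y" by (rule dn_tri[OF n1])
  then show ?thesis using c y e1 e2 by (intro bexI[OF _ y(1)]) linarith
qed

lemma split_lower:
  assumes "split_sets f n e B C" "b \<in> B" "c \<in> C"
  shows "dn f n b c > e"
proof -
  have "Inf ((\<lambda>(x,y). dn f n x y) ` (B \<times> C)) \<le> dn f n b c"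
    by (rule cInf_lower) (use assms(2,3) in \<open>auto intro!: bdd_belowI[of _ 0] dn_nonneg[OF n1]\<close>)
  then show ?thesis using assms(1) unfolding split_sets_def by linarith
qed


lemma NK_cover:
  assumes "e > 0" "\<A> \<subseteq> Kspace X"
  shows "\<exists>G. finite G \<and> G \<subseteq> Kspace X \<and> (\<forall>B\<in>\<A>. \<exists>C\<in>G. Hn f X n B C \<le> e)"
proof -
  obtain F where F: "finite F" "F \<subseteq> X" "\<forall>x\<in>X. \<exists>p\<in>F. dn f n x p < e"
    using net[OF cX cf fX n1 assms(1)] by blast
  let ?G = "{C. C \<subseteq> F \<and> C \<noteq> {}}"
  have "finite ?G" using F(1) by (rule finite_subset[rotated, OF finite_Pow_iff[THEN iffD2]]) auto
  moreover have "?G \<subseteq> Kspace X" unfolding Kspace_def using F(1,2)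
    by (auto intro: finite_imp_closed finite_subset)
  moreover have "\<forall>B\<in>\<A>. \<exists>C\<in>?G. Hn f X n B C \<le> e"
  proof
    fix B assume "B \<in> \<A>"
    then have B: "B \<subseteq> X" "B \<noteq> {}" using assms(2) unfolding Kspace_def by auto
    define C where "C = {p\<in>F. \<exists>b\<in>B. dn f n b p < e}"
    have "C \<noteq> {}" using B F(3) unfolding C_def by blast
    moreover have "Hn f X n B C \<le> e"
    proof (rule Hn_le[OF assms(1)])
      show "B \<subseteq> nbhd f X n e C" unfolding nbhd_def
      proof
        fix x assume x: "x \<in> B"
        then obtain p where p: "p \<in> F" "dn f n x p < e" using F(3) B by blast
        then have "p \<in> C" using x unfolding C_def by auto
        then have "Inf ((\<lambda>a. dn f n x a) ` C) \<le> dn f n x p" by (rule Inf_dn_le)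
        then show "x \<in> {x \<in> X. Inf ((\<lambda>a. dn f n x a) ` C) < e}" using p x B by auto
      qed
      show "C \<subseteq> nbhd f X n e B" unfolding nbhd_def
      proof
        fix p assume p: "p \<in> C"
        then obtain b where b: "b \<in> B" "dn f n b p < e" unfolding C_def by auto
        have "Inf ((\<lambda>a. dn f n p a) ` B) \<le> dn f n p b" by (rule Inf_dn_le[OF b(1)])
        then show "p \<in> {x \<in> X. Inf ((\<lambda>a. dn f n x a) ` B) < e}"
          using p b F(2) dn_sym[of f n b p] unfolding C_def by auto
      qed
    qed
    ultimately show "\<exists>C\<in>?G. Hn f X n B C \<le> e" unfolding C_def by (intro bexI[of _ C]) (auto simp: C_def)
  qed
  ultimately show ?thesis by blast
qed

lemma NK_mem:
  assumes "e > 0" "\<A> \<subseteq> Kspace X"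
  shows "\<exists>G. finite G \<and> G \<subseteq> Kspace X \<and> (\<forall>B\<in>\<A>. \<exists>C\<in>G. Hn f X n B C \<le> e) \<and> card G = NK f X \<A> n e"
proof -
  let ?S = "{card \<G> | \<G>. finite \<G> \<and> \<G> \<subseteq> Kspace X \<and> (\<forall>B\<in>\<A>. \<exists>C\<in>\<G>. Hn f X n B C \<le> e)}"
  have "?S \<noteq> {}" using NK_cover[OF assms] by blast
  then have "Inf ?S \<in> ?S" by (rule Inf_nat_def1)
  then show ?thesis unfolding NK_def by auto
qed

lemma NK_le:
  assumes "finite G" "G \<subseteq> Kspace X" "\<forall>B\<in>\<A>. \<exists>C\<in>G. Hn f X n B C \<le> e"
  shows "NK f X \<A> n e \<le> card G"
  unfolding NK_def by (rule cInf_lower) (use assms in auto)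

lemma NK_mono:
  assumes "0 < e" "e \<le> e'" "\<A> \<subseteq> Kspace X"
  shows "NK f X \<A> n e' \<le> NK f X \<A> n e"
proof -
  obtain G where G: "finite G" "G \<subseteq> Kspace X" "\<forall>B\<in>\<A>. \<exists>C\<in>G. Hn f X n B C \<le> e" "card G = NK f X \<A> n e"
    using NK_mem[OF assms(1,3)] by blast
  have "\<forall>B\<in>\<A>. \<exists>C\<in>G. Hn f X n B C \<le> e'" using G(3) assms(2) by force
  then show ?thesis using NK_le[OF G(1,2)] G(4) by simp
qed


lemma Bnum_eq: "Bnum f \<A> n e = Sup {card S | S. sfam f n \<A> e S}"
  unfolding Bnum_def sfam_def by simp

lemma sfam_bound:
  assumes "e > 0" "\<A> \<subseteq> Kspace X"
  shows "\<exists>K. \<forall>S. sfam f n \<A> e S \<longrightarrow> card S \<le> K"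
proof -
  obtain F where F: "finite F" "F \<subseteq> X" "\<forall>x\<in>X. \<exists>p\<in>F. dn f n x p < e/2"
    using net[OF cX cf fX n1, of "e/2"] assms(1) by auto
  have "card S \<le> card F" if S: "sfam f n \<A> e S" for S
  proof -
    define b where "b B = (SOME x. x \<in> B)" for B :: "'a set"
    define p where "p B = (SOME q. q \<in> F \<and> dn f n (b B) q < e/2)" for B
    have bB: "b B \<in> B" "b B \<in> X" if "B \<in> S" for B
    proof -
      have "B \<subseteq> X" "B \<noteq> {}" using that S assms(2) unfolding sfam_def Kspace_def by auto
      moreover have "b B \<in> B" unfolding b_def using \<open>B \<noteq> {}\<close> by (simp add: some_in_eq)
      ultimately show "b B \<in> B" "b B \<in> X" by auto
    qed
    have pB: "p B \<in> F \<and> dn f n (b B) (p B) < e/2" if "B \<in> S" for B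
      unfolding p_def by (rule someI_ex) (use F(3) bB[OF that] in blast)
    have "inj_on p S"
    proof (rule inj_onI, rule ccontr)
      fix B C assume BC: "B \<in> S" "C \<in> S" "p B = p C" "B \<noteq> C"
      have "split_sets f n e B C" using S BC unfolding sfam_def by auto
      then have "dn f n (b B) (b C) > e" using split_lower bB BC by blast
      moreover have "dn f n (b B) (b C) \<le> dn f n (b B) (p B) + dn f n (p B) (b C)" by (rule dn_tri[OF n1])
      moreover have "dn f n (p B) (b C) = dn f n (b C) (p C)" using BC(3) dn_sym by metis
      ultimately show False using pB[OF BC(1)] pB[OF BC(2)] by linarith
    qed
    moreover have "p ` S \<subseteq> F" using pB by auto
    ultimately show ?thesis using card_inj_on_le F(1) by blast
  qed
  then show ?thesis by blast
qed

lemma Bnum_finite: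
  assumes "e > 0" "\<A> \<subseteq> Kspace X"
  shows "finite {card S | S. sfam f n \<A> e S}"
proof -
  obtain K where "\<forall>S. sfam f n \<A> e S \<longrightarrow> card S \<le> K" using sfam_bound[OF assms] by blast
  then have "{card S | S. sfam f n \<A> e S} \<subseteq> {..K}" by auto
  then show ?thesis by (rule finite_subset) simp
qed

lemma Bnum_mem:
  assumes "e > 0" "\<A> \<subseteq> Kspace X"
  shows "\<exists>S. sfam f n \<A> e S \<and> card S = Bnum f \<A> n e"
proof -
  have ne: "{card S | S. sfam f n \<A> e S} \<noteq> {}" unfolding sfam_def by auto
  have "Max {card S | S. sfam f n \<A> e S} \<in> {card S | S. sfam f n \<A> e S}"
    by (rule Max_in[OF Bnum_finite[OF assms] ne])
  then show ?thesis unfolding Bnum_eq Sup_nat_def using ne by auto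
qed

lemma Bnum_upper:
  assumes "e > 0" "\<A> \<subseteq> Kspace X" "sfam f n \<A> e S"
  shows "card S \<le> Bnum f \<A> n e"
proof -
  have "card S \<in> {card S | S. sfam f n \<A> e S}" using assms(3) by blast
  moreover have "bdd_above {card S | S. sfam f n \<A> e S}"
    using Bnum_finite[OF assms(1,2)] by (simp only: bdd_above_nat)
  ultimately show ?thesis unfolding Bnum_eq by (rule cSup_upper)
qed

lemma Bnum_mono:
  assumes "0 < e" "e \<le> e'" "\<A> \<subseteq> Kspace X"
  shows "Bnum f \<A> n e' \<le> Bnum f \<A> n e"
proof -
  have e': "0 < e'" using assms(1,2) by linarith
  obtain S where S: "sfam f n \<A> e' S" "card S = Bnum f \<A> n e'" using Bnum_mem[OF e' assms(3)] by blast
  have sp: "split_sets f n e B C" if "split_sets f n e' B C" for B C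
    using that assms(2) unfolding split_sets_def by (meson order_le_less_trans)
  from S(1) have S1: "S \<subseteq> \<A>" "finite S" "\<And>B C. B \<in> S \<Longrightarrow> C \<in> S \<Longrightarrow> B \<noteq> C \<Longrightarrow> split_sets f n e' B C"
    unfolding sfam_def by auto
  have "sfam f n \<A> e S" unfolding sfam_def
  proof (intro conjI ballI impI)
    fix B C assume "B \<in> S" "C \<in> S" "B \<noteq> C"
    then show "split_sets f n e B C" by (intro sp S1(3))
  qed (use S1 in auto)
  then have "card S \<le> Bnum f \<A> n e" by (rule Bnum_upper[OF assms(1,3)])
  then show ?thesis using S(2) by simp
qed

end

context
  fixes X :: "'a::metric_space set" and f :: "'a \<Rightarrow> 'a" and n :: nat
  assumes cX: "compact X" and cf: "continuous_on X f" and fX: "f ` X \<subseteq> X" and n1: "n \<ge> 1"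
begin

lemmas NK_mem' = NK_mem[OF cX cf fX n1]
lemmas Hn_close' = Hn_close[OF cX cf fX n1]
lemmas split_lower' = split_lower[OF cX cf fX n1]

lemma key_card:
  assumes "e > 0" "\<A> \<subseteq> Kspace X" "finite_union_property \<A>" "sfam f n \<A> (3*e) S"
  shows "2 ^ card S - 1 \<le> NK f X \<A> n e"
proof -
  obtain G where G: "finite G" "G \<subseteq> Kspace X" "\<forall>B\<in>\<A>. \<exists>C\<in>G. Hn f X n B C \<le> e" "card G = NK f X \<A> n e"
    using NK_mem'[OF assms(1,2)] by blast
  have S: "S \<subseteq> \<A>" "finite S" "\<forall>B\<in>S. \<forall>C\<in>S. B \<noteq> C \<longrightarrow> split_sets f n (3*e) B C"
    using assms(4) unfolding sfam_def by auto
  let ?P = "Pow S - {{}}"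
  have UA: "\<Union>I \<in> \<A>" if "I \<in> ?P" for I
  proof -
    have "I \<subseteq> S" "I \<noteq> {}" using that by auto
    moreover have "finite I" using \<open>I \<subseteq> S\<close> S(2) by (rule finite_subset)
    moreover have "I \<subseteq> \<A>" using \<open>I \<subseteq> S\<close> S(1) by (rule order_trans)
    ultimately show ?thesis using union_mem[OF assms(3)] by simp
  qed
  define c where "c I = (SOME C. C \<in> G \<and> Hn f X n (\<Union>I) C \<le> e)" for I
  have cI: "c I \<in> G \<and> Hn f X n (\<Union>I) (c I) \<le> e" if "I \<in> ?P" for I
    unfolding c_def by (rule someI_ex) (use G(3) UA[OF that] in blast)
  have UX: "\<Union>I \<subseteq> X \<and> \<Union>I \<noteq> {}" if "I \<in> ?P" for I
  proof -
    have "\<Union>I \<in> Kspace X" using UA[OF that] assms(2) by blast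
    then show ?thesis unfolding Kspace_def mem_Collect_eq by (elim conjE) (intro conjI)
  qed
  have noclash: False if IJ: "I \<in> ?P" "J \<in> ?P" "B \<in> I" "B \<notin> J" "c I = c J" for I J B
  proof -
    have BS: "B \<in> S" using IJ(1,3) by blast
    then have "B \<in> Kspace X" using S(1) assms(2) by blast
    then have B: "B \<in> S" "B \<subseteq> X" "B \<noteq> {}" using BS unfolding Kspace_def by auto
    then obtain x where x: "x \<in> B" by auto
    have "c I \<in> Kspace X" using cI[OF IJ(1)] G(2) by blast
    then have C: "c I \<subseteq> X" "c I \<noteq> {}" unfolding Kspace_def by auto
    have h1: "Hn f X n (\<Union>J) (c I) \<le> e" using cI[OF IJ(2)] IJ(5) by simp
    have xI: "x \<in> \<Union>I" using x IJ(3) by blast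
    obtain y where y: "y \<in> \<Union>J" "dn f n x y < 3*e"
      using Hn_close'[OF conjunct1[OF UX[OF IJ(1)]] conjunct2[OF UX[OF IJ(1)]]
          conjunct1[OF UX[OF IJ(2)]] conjunct2[OF UX[OF IJ(2)]] C
          conjunct2[OF cI[OF IJ(1)]] h1 assms(1) xI] by blast
    then obtain B' where B': "B' \<in> J" "y \<in> B'" by auto
    have "B' \<in> S" using B'(1) IJ(2) by blast
    moreover have "B' \<noteq> B" using B'(1) IJ(4) by blast
    ultimately have "split_sets f n (3*e) B B'" using S(3) B(1) by metis
    then have "dn f n x y > 3*e" using split_lower'[OF _ x B'(2)] by blast
    then show False using y by simp
  qed
  have "inj_on c ?P"
  proof (rule inj_onI, rule ccontr)
    fix I J assume IJ: "I \<in> ?P" "J \<in> ?P" "c I = c J" "I \<noteq> J"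
    then obtain B where "(B \<in> I \<and> B \<notin> J) \<or> (B \<in> J \<and> B \<notin> I)" by blast
    then show False
    proof
      assume "B \<in> I \<and> B \<notin> J" then show False using noclash[OF IJ(1,2) _ _ IJ(3)] by blast
    next
      assume "B \<in> J \<and> B \<notin> I" then show False using noclash[OF IJ(2,1) _ _ IJ(3)[symmetric]] by blast
    qed
  qed
  moreover have "c ` ?P \<subseteq> G" using cI by blast
  ultimately have "card ?P \<le> card G" by (rule card_inj_on_le[OF _ _ G(1)])
  moreover have "card ?P = 2 ^ card S - 1" using S(2) by (simp add: card_Diff_singleton card_Pow)
  ultimately show ?thesis using G(4) by simp
qed

end

lemma LS:
  fixes u v :: "nat \<Rightarrow> real"
  assumes "\<And>n. u n \<le> v n + c / real n"
  shows "limsup (\<lambda>n. ereal (u n)) \<le> limsup (\<lambda>n. ereal (v n))"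
proof -
  have "limsup (\<lambda>n. ereal (u n)) \<le> limsup (\<lambda>n. ereal (v n) + ereal (c / real n))"
    by (rule Limsup_mono) (use assms in simp)
  also have "\<dots> \<le> limsup (\<lambda>n. ereal (v n)) + limsup (\<lambda>n. ereal (c / real n))"
    by (rule ereal_limsup_add_mono)
  also have "limsup (\<lambda>n. ereal (c / real n)) = 0"
  proof -
    have "(\<lambda>n. ereal (c / real n)) \<longlonglongrightarrow> ereal 0"
      by (intro tendsto_ereal lim_const_over_n)
    then have "limsup (\<lambda>n. ereal (c / real n)) = ereal 0"
      by (rule lim_imp_Limsup[OF trivial_limit_sequentially])
    then show ?thesis by (simp add: zero_ereal_def)
  qed
  finally show ?thesis by simp
qed

lemma ln_lower: "(x::real) > 0 \<Longrightarrow> ln x \<ge> 1 - 1 / x"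
proof -
  assume x: "x > 0"
  have "ln (inverse x) \<le> inverse x - 1" using x by (intro ln_le_minus_one) simp
  then show ?thesis using ln_inverse[of x] by (simp add: divide_inverse)
qed

lemma ln2_half: "ln (2::real) \<ge> 1/2"
  using ln_lower[of "2::real"] by simp

lemma lglg_lower: "lg (lg (real N)) \<ge> -1"
proof (cases "N \<ge> 2")
  case True
  then have "real N \<ge> 2" by simp
  then have l: "ln (real N) \<ge> ln 2" by simp
  then have L: "ln (real N) \<ge> 1/2" using ln2_half by linarith
  then have "1 / ln (real N) \<le> 2" by (simp add: field_simps)
  then have "ln (ln (real N)) \<ge> -1" using ln_lower[of "ln (real N)"] L by linarith
  moreover have "ln (real N) > 0" using True by simp
  ultimately show ?thesis using True unfolding lg_def by simp
next
  case False
  then have "N = 0 \<or> N = 1" by auto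
  then show ?thesis unfolding lg_def by auto
qed

lemma lglg_mono: "N' \<le> N \<Longrightarrow> lg (lg (real N')) \<le> lg (lg (real N)) + 1"
proof (cases "N' \<ge> 2")
  case True
  assume NN: "N' \<le> N"
  have p1: "ln (real N') > 0" using True by simp
  have p2: "ln (real N) > 0" using True NN by simp
  have "ln (real N') \<le> ln (real N)" using NN True by simp
  then have "ln (ln (real N')) \<le> ln (ln (real N))" using p1 p2 by simp
  moreover have "lg (lg (real N')) = ln (ln (real N'))" using p1 True unfolding lg_def by simp
  moreover have "lg (lg (real N)) = ln (ln (real N))" using p2 True NN unfolding lg_def by simp
  ultimately show ?thesis by linarith
next
  case False
  then have "N' = 0 \<or> N' = 1" by auto
  then have "lg (lg (real N')) = 0" unfolding lg_def by auto
  then show ?thesis using lglg_lower[of N] by linarith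
qed

lemma lg_mono_nat: "M' \<le> M \<Longrightarrow> lg (real M') \<le> lg (real M)"
  unfolding lg_def by auto

lemma lg_key:
  assumes "m \<ge> 2 \<longrightarrow> 2 ^ m - 1 \<le> N"
  shows "lg (real m) \<le> lg (lg (real N)) + 2"
proof (cases "m \<ge> 2")
  case False
  then have "m = 0 \<or> m = 1" by auto
  then have "lg (real m) = 0" unfolding lg_def by auto
  then show ?thesis using lglg_lower[of N] by linarith
next
  case True
  then have N: "2 ^ m - 1 \<le> N" using assms by simp
  have "2 ^ (m - 1) \<le> (2::nat) ^ m - 1"
  proof -
    obtain k where k: "m = Suc k" using True by (cases m) auto
    have "(1::nat) \<le> 2 ^ k" by simp
    then show ?thesis using k by simp
  qed
  with N have "2 ^ (m - 1) \<le> N" by linarith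
  then have "real (2 ^ (m - 1)) \<le> real N" by linarith
  then have R: "(2::real) ^ (m - 1) \<le> real N" by simp
  have pos: "(0::real) < 2 ^ (m - 1)" by simp
  have Npos: "0 < real N" using R pos by linarith
  have "ln ((2::real) ^ (m - 1)) \<le> ln (real N)" using R by (subst ln_le_cancel_iff[OF pos Npos])
  moreover have "ln ((2::real) ^ (m - 1)) = real (m - 1) * ln 2" by (simp add: ln_realpow)
  moreover have "real (m - 1) * ln 2 \<ge> real (m - 1) * (1/2)"
    using ln2_half by (intro mult_left_mono) auto
  moreover have "real (m - 1) \<ge> real m / 2" using True by linarith
  ultimately have LN: "ln (real N) \<ge> real m / 4" by linarith
  have mpos: "real m / 4 > 0" using True by simp
  have "ln (real m / 4) \<le> ln (ln (real N))" using LN mpos by simp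
  moreover have "ln (real m / 4) = ln (real m) - ln 4" using True by (simp add: ln_div)
  moreover have "ln (4::real) \<le> 2"
  proof -
    have "ln (4::real) = 2 * ln 2" using ln_realpow[of "2::real" 2] by simp
    then show ?thesis using ln_2_less_1 by linarith
  qed
  ultimately have "ln (real m) \<le> ln (ln (real N)) + 2" by linarith
  moreover have "ln (real N) > 0" using LN mpos by linarith
  moreover have "real N > 0" using R pos by linarith
  ultimately show ?thesis using True unfolding lg_def by simp
qed

lemma mono_Lim:
  fixes F :: "real \<Rightarrow> ereal"
  assumes "\<And>x y. 0 < x \<Longrightarrow> x \<le> y \<Longrightarrow> F y \<le> F x"
  shows "Lim (at_right 0) F = (SUP x\<in>{0<..}. F x)"
proof (rule tendsto_Lim[OF trivial_limit_at_right_real])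
  let ?S = "SUP x\<in>{0<..}. F x"
  show "(F \<longlongrightarrow> ?S) (at_right 0)"
  proof (rule order_tendstoI)
    fix a assume "a < ?S"
    then obtain x0 where x0: "x0 > 0" "a < F x0" by (auto simp: less_SUP_iff)
    have "\<forall>y>0. y < x0 \<longrightarrow> a < F y"
    proof (intro allI impI)
      fix y :: real assume "y > 0" "y < x0"
      then have "F x0 \<le> F y" using assms by simp
      then show "a < F y" using x0(2) by simp
    qed
    then show "eventually (\<lambda>y. a < F y) (at_right 0)"
      unfolding eventually_at_right_field using x0(1) by blast
  next
    fix a assume a: "?S < a"
    have "\<forall>y>0. y < 1 \<longrightarrow> F y < a"
    proof (intro allI impI)
      fix y :: real assume "y > 0" "y < 1"
      then have "F y \<le> ?S" by (intro SUP_upper) simp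
      then show "F y < a" using a by simp
    qed
    then show "eventually (\<lambda>y. F y < a) (at_right 0)"
      unfolding eventually_at_right_field by (intro exI[of _ 1]) simp
  qed
qed

theorem lemma4p4:
  fixes X :: "'a::metric_space set" and f :: "'a \<Rightarrow> 'a" and \<A> :: "'a set set"
  assumes "compact X"
    and "continuous_on X f" and "f ` X \<subseteq> X"
    and "\<A> \<subseteq> Kspace X" and "\<A> \<noteq> {}"
    and "finite_union_property \<A>"
  shows "Eent f X \<A> \<ge> Lim (at_right 0)
     (\<lambda>\<epsilon>. limsup (\<lambda>n. ereal (lg (real (Bnum f \<A> n \<epsilon>)) / real n)))"
proof -
  note cX = assms(1) and cf = assms(2) and fX = assms(3) and AK = assms(4)
  define g where "g = (\<lambda>\<epsilon>. limsup (\<lambda>n. ereal (lg (lg (real (NK f X \<A> n \<epsilon>))) / real n)))"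
  define h where "h = (\<lambda>\<epsilon>. limsup (\<lambda>n. ereal (lg (real (Bnum f \<A> n \<epsilon>)) / real n)))"
  have gm: "g y \<le> g x" if xy: "0 < x" "x \<le> y" for x y :: real
    unfolding g_def
  proof (rule LS[where c=1])
    fix n :: nat
    show "lg (lg (real (NK f X \<A> n y))) / real n \<le> lg (lg (real (NK f X \<A> n x))) / real n + 1 / real n"
    proof (cases "n = 0")
      case True then show ?thesis by simp
    next
      case False
      then have n1: "n \<ge> 1" by simp
      have "NK f X \<A> n y \<le> NK f X \<A> n x" by (rule NK_mono[OF cX cf fX n1 xy AK])
      then have "lg (lg (real (NK f X \<A> n y))) \<le> lg (lg (real (NK f X \<A> n x))) + 1" by (rule lglg_mono)
      then have "lg (lg (real (NK f X \<A> n y))) / real n \<le> (lg (lg (real (NK f X \<A> n x))) + 1) / real n"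
        by (rule divide_right_mono) simp
      then show ?thesis by (simp add: add_divide_distrib)
    qed
  qed
  have hm: "h y \<le> h x" if xy: "0 < x" "x \<le> y" for x y :: real
    unfolding h_def
  proof (rule LS[where c=0])
    fix n :: nat
    show "lg (real (Bnum f \<A> n y)) / real n \<le> lg (real (Bnum f \<A> n x)) / real n + 0 / real n"
    proof (cases "n = 0")
      case True then show ?thesis by simp
    next
      case False
      then have n1: "n \<ge> 1" by simp
      have "Bnum f \<A> n y \<le> Bnum f \<A> n x" by (rule Bnum_mono[OF cX cf fX n1 xy AK])
      then have "lg (real (Bnum f \<A> n y)) \<le> lg (real (Bnum f \<A> n x))" by (rule lg_mono_nat)
      then have "lg (real (Bnum f \<A> n y)) / real n \<le> lg (real (Bnum f \<A> n x)) / real n"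
        by (rule divide_right_mono) simp
      then show ?thesis by simp
    qed
  qed
  have hg: "h (3 * x) \<le> g x" if x: "0 < x" for x :: real
    unfolding g_def h_def
  proof (rule LS[where c=2])
    fix n :: nat
    show "lg (real (Bnum f \<A> n (3 * x))) / real n \<le> lg (lg (real (NK f X \<A> n x))) / real n + 2 / real n"
    proof (cases "n = 0")
      case True then show ?thesis by simp
    next
      case False
      then have n1: "n \<ge> 1" by simp
      have x3: "0 < 3 * x" using x by simp
      obtain S where S: "sfam f n \<A> (3 * x) S" "card S = Bnum f \<A> n (3 * x)"
        using Bnum_mem[OF cX cf fX n1 x3 AK] by blast
      have "2 ^ card S - 1 \<le> NK f X \<A> n x" by (rule key_card[OF cX cf fX n1 x AK assms(6) S(1)])
      then have "lg (real (card S)) \<le> lg (lg (real (NK f X \<A> n x))) + 2" by (intro lg_key) simp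
      then have "lg (real (Bnum f \<A> n (3 * x))) \<le> lg (lg (real (NK f X \<A> n x))) + 2" using S(2) by simp
      then have "lg (real (Bnum f \<A> n (3 * x))) / real n \<le> (lg (lg (real (NK f X \<A> n x))) + 2) / real n"
        by (rule divide_right_mono) simp
      then show ?thesis by (simp add: add_divide_distrib)
    qed
  qed
  have Lg: "Lim (at_right 0) g = (SUP x\<in>{0<..}. g x)" by (rule mono_Lim) (rule gm)
  have Lh: "Lim (at_right 0) h = (SUP x\<in>{0<..}. h x)" by (rule mono_Lim) (rule hm)
  have "(SUP x\<in>{0<..}. h x) \<le> (SUP x\<in>{0<..}. g x)"
  proof (rule SUP_least)
    fix x :: real assume "x \<in> {0<..}"
    then have x: "0 < x" by simp
    then have "x / 3 > 0" by simp
    then have "h (3 * (x / 3)) \<le> g (x / 3)" by (rule hg)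
    moreover have "g (x / 3) \<le> (SUP x\<in>{0<..}. g x)" using \<open>x / 3 > 0\<close> by (intro SUP_upper) simp
    ultimately show "h x \<le> (SUP x\<in>{0<..}. g x)" by simp
  qed
  then have "Lim (at_right 0) h \<le> Lim (at_right 0) g" using Lg Lh by simp
  then show ?thesis unfolding Eent_def g_def h_def .
qed

end
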